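(* Let $\Phi\in C^1_c([0,\infty))$ (continuously differentiable with compact support) and $T>0$. Then the functions $t\mapsto\int_0^\infty f_\varepsilon(t,x)\Phi(x)\,dx$, $\varepsilon\in(0,1)$, are bounded in $W^{1,\infty}(0,T)$ uniformly with respect to $\varepsilon\in(0,1)$.
   Context: Let $\mathbb R_+=(0,\infty)$. The kernels $K,C:[0,\infty)^2\to[0,\infty)$ are symmetric and belong to $W^{1,\infty}_{\mathrm{loc}}([0,\infty)^2)$. There are constants $\alpha,\beta\ge0$ with $\partial_xK\ge-\alpha$ and $\partial_xC\ge-\beta$ a.e. They satisfy: - (CH1) for every $R\ge1$, $\sup_{x\in[0,R]}K(x,y)/y\to0$ as $y\to\infty$; - (CH2) there is a constant $\mathcal M\ge1$ such that $\sup_{x\in[0,R],\,y\ge R}C(x,y)\le\mathcal M$ for every $R\ge1$. Let $f^{\mathrm{in}}\in L^1(\mathbb R_+,(1+x)dx)$, $f^{\mathrm{in}}\ge0$ a.e., and $\|f^{\mathrm{in}}\|_{0,1}=\int_0^\infty(1+x)f^{\mathrm{in}}$. For $\varepsilon\in(0,1)$, $i\ge1$ let $\Lambda^\varepsilon_i=[(i-\tfrac12)\varepsilon,(i+\tfrac12)\varepsilon)$. Define $$c^{\mathrm{in},\varepsilon}_i=\frac1\varepsilon\int_{\Lambda^\varepsilon_i}f^{\mathrm{in}},\quad K^\varepsilon_{i,j}=\frac1\varepsilon\int_{\Lambda^\varepsilon_i\times\Lambda^\varepsilon_j}K,\quad C^\varepsilon_{i,j}=\frac1\varepsilon\int_{\Lambda^\varepsilon_i\times\Lambda^\varepsilon_j}C.$$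 The $\varepsilon$-discrete system is, with $c^\varepsilon_0\equiv0$, $i\ge1$, $$\frac{dc^\varepsilon_i}{dt}=c^\varepsilon_{i-1}\sum_{j=1}^{i-1}jK^\varepsilon_{i-1,j}c^\varepsilon_j-c^\varepsilon_i\sum_{j=1}^{i}jK^\varepsilon_{i,j}c^\varepsilon_j-\sum_{j\ge i}K^\varepsilon_{i,j}c^\varepsilon_ic^\varepsilon_j+c^\varepsilon_{i-1}\sum_{j\ge i-1}jC^\varepsilon_{i-1,j}c^\varepsilon_j-c^\varepsilon_i\sum_{j\ge i}jC^\varepsilon_{i,j}c^\varepsilon_j-\sum_{j=1}^{i}C^\varepsilon_{i,j}c^\varepsilon_ic^\varepsilon_j,$$ with $c^\varepsilon_i(0)=c^{\mathrm{in},\varepsilon}_i$. Standing assumption: for each $\varepsilon$, $c^\varepsilon$ is a solution on $[0,\infty)$ with nonnegative $C^1$ components and convergent series. For every finitely supported real $(\phi_i)$, $$\frac{d}{dt}\sum_i\phi_ic^\varepsilon_i=\sum_{i}\sum_{j=1}^{i}[j(\phi_{i+1}-\phi_i)-\phi_j]K^\varepsilon_{i,j}c^\varepsilon_ic^\varepsilon_j+\sum_i\sum_{j\ge i}[j(\phi_{i+1}-\phi_i)-\phi_j]C^\varepsilon_{i,j}c^\varepsilon_ic^\varepsilon_j .$$ Also $\sum_i ic^\varepsilon_i(t)\le\sum_i ic^{\mathrm{in},\varepsilon}_i$ for all $t\ge0$. Set $f_\varepsilon(t,x)=\sum_i c^\varepsilon_i(t)\mathbf 1_{\Lambda^\varepsilon_i}(x)$.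 *)

theory Defs
  imports "HOL-Analysis.Analysis"
begin

definition Lam :: "real \<Rightarrow> nat \<Rightarrow> real set" where
  "Lam \<epsilon> i = {(real i - 1/2) * \<epsilon> ..< (real i + 1/2) * \<epsilon>}"

definition cin :: "(real \<Rightarrow> real) \<Rightarrow> real \<Rightarrow> nat \<Rightarrow> real" where
  "cin fin \<epsilon> i = (1/\<epsilon>) * (LINT x:Lam \<epsilon> i|lborel. fin x)"

definition kd :: "(real \<Rightarrow> real \<Rightarrow> real) \<Rightarrow> real \<Rightarrow> nat \<Rightarrow> nat \<Rightarrow> real" where
  "kd K \<epsilon> i j = (1/\<epsilon>) * (LINT p:(Lam \<epsilon> i \<times> Lam \<epsilon> j)|lborel. K (fst p) (snd p))"

text \<open>Right-hand side of the eps-discrete system at index i (i >= 1), for a sequence c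
  with the convention c 0 = 0.  Sums over j >= m are written as series over n with j = n + m.\<close>
definition disc_rhs :: "(nat \<Rightarrow> nat \<Rightarrow> real) \<Rightarrow> (nat \<Rightarrow> nat \<Rightarrow> real) \<Rightarrow> (nat \<Rightarrow> real) \<Rightarrow> nat \<Rightarrow> real" where
  "disc_rhs Kd Cd c i =
     c (i - 1) * (\<Sum>j=1..i - 1. real j * Kd (i - 1) j * c j)
   - c i * (\<Sum>j=1..i. real j * Kd i j * c j)
   - (\<Sum>n. Kd i (n + i) * c i * c (n + i))
   + c (i - 1) * (\<Sum>n. real (n + (i - 1)) * Cd (i - 1) (n + (i - 1)) * c (n + (i - 1)))
   - c i * (\<Sum>n. real (n + i) * Cd i (n + i) * c (n + i))
   - (\<Sum>j=1..i. Cd i j * c i * c j)"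

text \<open>Terms of the weak formulation: K-part at row i (finite sum over j = 1..i),
  C-part at row i, column j = m + i.\<close>
definition wK :: "(nat \<Rightarrow> nat \<Rightarrow> real) \<Rightarrow> (nat \<Rightarrow> real) \<Rightarrow> (nat \<Rightarrow> real) \<Rightarrow> nat \<Rightarrow> real" where
  "wK Kd c \<phi> i = (\<Sum>j=1..i. (real j * (\<phi> (i + 1) - \<phi> i) - \<phi> j) * Kd i j * c i * c j)"

definition wC :: "(nat \<Rightarrow> nat \<Rightarrow> real) \<Rightarrow> (nat \<Rightarrow> real) \<Rightarrow> (nat \<Rightarrow> real) \<Rightarrow> nat \<Rightarrow> nat \<Rightarrow> real" where
  "wC Cd c \<phi> i m = (real (m + i) * (\<phi> (i + 1) - \<phi> i) - \<phi> (m + i)) * Cd i (m + i) * c i * c (m + i)"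

definition feps :: "real \<Rightarrow> (real \<Rightarrow> nat \<Rightarrow> real) \<Rightarrow> real \<Rightarrow> real \<Rightarrow> real" where
  "feps \<epsilon> c t x = (\<Sum>n. c t (Suc n) * indicator (Lam \<epsilon> (Suc n)) x)"

end

theory Submission
  imports Defs
begin


lemma Lam_bounds: "x \<in> Lam e i \<Longrightarrow> (real i - 1/2)*e \<le> x \<and> x < (real i + 1/2)*e"
  by (simp add: Lam_def)

lemma Lam_pos: "0 < e \<Longrightarrow> 1 \<le> i \<Longrightarrow> x \<in> Lam e i \<Longrightarrow> 0 < x"
proof -
  assume a: "0 < e" "1 \<le> i" "x \<in> Lam e i"
  have "real i - 1/2 > 0" using a(2) by simp
  then have "0 < (real i - 1/2)*e" using a(1) by simp
  then show ?thesis using Lam_bounds[OF a(3)] by linarith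
qed

lemma Lam_disj: assumes "0<e" "i \<noteq> j" shows "Lam e i \<inter> Lam e j = {}"
proof (rule ccontr)
  assume "Lam e i \<inter> Lam e j \<noteq> {}"
  then obtain x where x: "x \<in> Lam e i" "x \<in> Lam e j" by blast
  have "(real i - 1/2)*e < (real j + 1/2)*e" using Lam_bounds[OF x(1)] Lam_bounds[OF x(2)] by linarith
  then have "real i - 1/2 < real j + 1/2" using assms(1) by simp
  then have "i \<le> j" by linarith
  have "(real j - 1/2)*e < (real i + 1/2)*e" using Lam_bounds[OF x(1)] Lam_bounds[OF x(2)] by linarith
  then have "real j - 1/2 < real i + 1/2" using assms(1) by simp
  then have "j \<le> i" by linarith
  with \<open>i \<le> j\<close> assms(2) show False by simp
qed

lemma Lam_sets[measurable]: "Lam e i \<in> sets borel"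
  by (simp add: Lam_def)

lemma fin_bound:
  fixes fin :: "real \<Rightarrow> real" and a :: "nat \<Rightarrow> real"
  assumes fin_L1: "set_integrable lborel {0<..} (\<lambda>x. (1 + x) * fin x)"
    and fin_nonneg: "AE x in lborel. x > 0 \<longrightarrow> fin x \<ge> 0"
    and e: "0<e"
    and a: "\<And>i. 0 \<le> a i" "\<And>i x. 1 \<le> i \<Longrightarrow> x \<in> Lam e i \<Longrightarrow> a i \<le> 1 + x"
  shows "(\<Sum>i=1..N. a i * (LINT x:Lam e i|lborel. fin x)) \<le> (LINT x:{0<..}|lborel. (1+x) * fin x)"
proof -
  let ?G = "\<lambda>x. (1 + x) * fin x"
  have intG: "integrable lborel (\<lambda>x. indicator (Lam e i) x * ?G x)" if "1 \<le> i" for i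
  proof -
    have "set_integrable lborel (Lam e i) ?G"
      by (rule set_integrable_subset[OF fin_L1]) (use Lam_pos[OF e that] Lam_sets in auto)
    then show ?thesis by (simp add: set_integrable_def)
  qed
  have step: "a i * (LINT x:Lam e i|lborel. fin x) \<le> (\<integral>x. indicator (Lam e i) x * ?G x \<partial>lborel)" if "1 \<le> i" for i
  proof -
    have "a i * (LINT x:Lam e i|lborel. fin x) = (\<integral>x. a i * (indicator (Lam e i) x * fin x) \<partial>lborel)"
      by (simp add: set_lebesgue_integral_def)
    also have "\<dots> \<le> (\<integral>x. indicator (Lam e i) x * ?G x \<partial>lborel)"
    proof (rule integral_mono_AE'[OF intG[OF that]])
      show "AE x in lborel. a i * (indicator (Lam e i) x * fin x) \<le> indicator (Lam e i) x * ?G x"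
        using fin_nonneg
      proof eventually_elim
        case (elim x)
        show ?case
        proof (cases "x \<in> Lam e i")
          case True
          then have "x > 0" using Lam_pos[OF e that] by blast
          with elim have "fin x \<ge> 0" by simp
          then show ?thesis using True a(2)[OF that True] by (simp add: mult_right_mono)
        qed simp
      qed
      show "AE x in lborel. 0 \<le> indicator (Lam e i) x * ?G x"
        using fin_nonneg
      proof eventually_elim
        case (elim x)
        show ?case
        proof (cases "x \<in> Lam e i")
          case True
          then have "x > 0" using Lam_pos[OF e that] by blast
          with elim show ?thesis by simp
        qed simp
      qed
    qed
    finally show ?thesis .
  qed
  have "(\<Sum>i=1..N. a i * (LINT x:Lam e i|lborel. fin x)) \<le> (\<Sum>i=1..N. (\<integral>x. indicator (Lam e i) x * ?G x \<partial>lborel))"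
    by (rule sum_mono) (use step in auto)
  also have "\<dots> = (\<integral>x. (\<Sum>i=1..N. indicator (Lam e i) x * ?G x) \<partial>lborel)"
    using Bochner_Integration.integral_sum[where I="{1..N}" and f="\<lambda>i x. indicator (Lam e i) x * ?G x"] intG by simp
  also have "\<dots> = (\<integral>x. indicator (\<Union>i\<in>{1..N}. Lam e i) x * ?G x \<partial>lborel)"
  proof -
    have "disjoint_family_on (Lam e) {1..N}"
      using Lam_disj[OF e] by (auto simp: disjoint_family_on_def)
    then show ?thesis
      by (simp add: indicator_UN_disjoint sum_distrib_right)
  qed
  also have "\<dots> \<le> (\<integral>x. indicator {0<..} x * ?G x \<partial>lborel)"
  proof (rule integral_mono_AE')
    show "integrable lborel (\<lambda>x. indicator {0<..} x * ?G x)" using fin_L1 by (simp add: set_integrable_def)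
    show "AE x in lborel. indicator (\<Union>i\<in>{1..N}. Lam e i) x * ?G x \<le> indicator {0<..} x * ?G x"
      using fin_nonneg
    proof eventually_elim
      case (elim x)
      show ?case
      proof (cases "x \<in> (\<Union>i\<in>{1..N}. Lam e i)")
        case True
        then have "x > 0" using Lam_pos[OF e] by auto
        with elim True show ?thesis by simp
      next
        case False
        then show ?thesis using elim by (auto simp: indicator_def)
      qed
    qed
    show "AE x in lborel. 0 \<le> indicator {0<..} x * ?G x"
      using fin_nonneg by eventually_elim (auto simp: indicator_def)
  qed
  finally show ?thesis by (simp add: set_lebesgue_integral_def)
qed



lemma suminf_nonpos': "summable f \<Longrightarrow> (\<And>n. f n \<le> (0::real)) \<Longrightarrow> suminf f \<le> 0"
  using suminf_le[of f "\<lambda>_. 0"] by simp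

lemma number_mono:
  fixes Kd Cd :: "nat \<Rightarrow> nat \<Rightarrow> real" and cc :: "real \<Rightarrow> nat \<Rightarrow> real"
  assumes Kd_nn: "\<And>i j. 1 \<le> i \<Longrightarrow> 1 \<le> j \<Longrightarrow> 0 \<le> Kd i j"
    and Cd_nn: "\<And>i j. 1 \<le> i \<Longrightarrow> 1 \<le> j \<Longrightarrow> 0 \<le> Cd i j"
    and c_nn: "\<And>t i. t \<ge> 0 \<Longrightarrow> 1 \<le> i \<Longrightarrow> 0 \<le> cc t i"
    and weak: "\<forall>\<phi>::nat \<Rightarrow> real. finite {i. \<phi> i \<noteq> 0} \<longrightarrow> (\<forall>t\<ge>0.
         summable (\<lambda>n. wK Kd (cc t) \<phi> (Suc n))
       \<and> (\<forall>i\<ge>1. summable (\<lambda>m. wC Cd (cc t) \<phi> i m))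
       \<and> summable (\<lambda>n. \<Sum>m. wC Cd (cc t) \<phi> (Suc n) m)
       \<and> ((\<lambda>s. \<Sum>i\<in>{i. \<phi> i \<noteq> 0 \<and> i \<ge> 1}. \<phi> i * cc s i) has_real_derivative
            (\<Sum>n. wK Kd (cc t) \<phi> (Suc n))
          + (\<Sum>n. \<Sum>m. wC Cd (cc t) \<phi> (Suc n) m)) (at t within {0..}))"
    and t: "0 \<le> t"
  shows "(\<Sum>i=1..N. cc t i) \<le> (\<Sum>i=1..N. cc 0 i)"
proof -
  define \<phi> :: "nat \<Rightarrow> real" where "\<phi> i = (if 1 \<le> i \<and> i \<le> N then 1 else 0)" for i
  have supp: "{i. \<phi> i \<noteq> 0} = {1..N}" by (auto simp: \<phi>_def)
  have supp2: "{i. \<phi> i \<noteq> 0 \<and> i \<ge> 1} = {1..N}" by (auto simp: \<phi>_def)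
  define S where "S s = (\<Sum>i=1..N. cc s i)" for s
  have Seq: "(\<lambda>s. \<Sum>i\<in>{i. \<phi> i \<noteq> 0 \<and> i \<ge> 1}. \<phi> i * cc s i) = S"
    unfolding supp2 S_def by (rule ext, rule sum.cong) (auto simp: \<phi>_def)
  define D where "D s = (\<Sum>n. wK Kd (cc s) \<phi> (Suc n)) + (\<Sum>n. \<Sum>m. wC Cd (cc s) \<phi> (Suc n) m)" for s
  have W: "summable (\<lambda>n. wK Kd (cc s) \<phi> (Suc n))
       \<and> (\<forall>i\<ge>1. summable (\<lambda>m. wC Cd (cc s) \<phi> i m))
       \<and> summable (\<lambda>n. \<Sum>m. wC Cd (cc s) \<phi> (Suc n) m)
       \<and> (S has_real_derivative D s) (at s within {0..})" if "s \<ge> 0" for s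
    using weak[rule_format, of \<phi> s] supp that unfolding Seq D_def by auto
  have coef: "real j * (\<phi> (i + 1) - \<phi> i) - \<phi> j \<le> 0" if "1 \<le> i" for i j
  proof -
    have "\<phi> (i+1) - \<phi> i \<le> 0" using that by (simp add: \<phi>_def)
    moreover have "\<phi> j \<ge> 0" by (simp add: \<phi>_def)
    moreover have "real j * (\<phi> (i+1) - \<phi> i) \<le> 0" using calculation(1) by (simp add: mult_nonneg_nonpos)
    ultimately show ?thesis by linarith
  qed
  have Dneg: "D s \<le> 0" if s: "s \<ge> 0" for s
  proof -
    have "wK Kd (cc s) \<phi> (Suc n) \<le> 0" for n
      unfolding wK_def
    proof (rule sum_nonpos)
      fix j assume j: "j \<in> {1..Suc n}"
      have nn: "0 \<le> Kd (Suc n) j * cc s (Suc n) * cc s j"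
        using Kd_nn[of "Suc n" j] c_nn[OF s, of "Suc n"] c_nn[OF s, of j] j by auto
      show "(real j * (\<phi> (Suc n + 1) - \<phi> (Suc n)) - \<phi> j) * Kd (Suc n) j * cc s (Suc n) * cc s j \<le> 0"
        using mult_nonpos_nonneg[OF coef[of "Suc n" j] nn] by (simp only: mult.assoc)
    qed
    then have A: "(\<Sum>n. wK Kd (cc s) \<phi> (Suc n)) \<le> 0"
      by (intro suminf_nonpos') (use W[OF s] in auto)
    have wc: "wC Cd (cc s) \<phi> (Suc n) m \<le> 0" for n m
    proof -
      have nn: "0 \<le> Cd (Suc n) (m + Suc n) * cc s (Suc n) * cc s (m + Suc n)"
        using Cd_nn[of "Suc n" "m + Suc n"] c_nn[OF s, of "Suc n"] c_nn[OF s, of "m + Suc n"] by auto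
      show ?thesis unfolding wC_def
        using mult_nonpos_nonneg[OF coef[of "Suc n" "m + Suc n"] nn] by (simp only: mult.assoc)
    qed
    have Bn: "(\<Sum>m. wC Cd (cc s) \<phi> (Suc n) m) \<le> 0" for n
      by (rule suminf_nonpos') (use W[OF s] wc in auto)
    have B: "(\<Sum>n. \<Sum>m. wC Cd (cc s) \<phi> (Suc n) m) \<le> 0"
      by (rule suminf_nonpos'[of "\<lambda>n. \<Sum>m. wC Cd (cc s) \<phi> (Suc n) m"]) (use W[OF s] Bn in auto)
    show ?thesis using A B by (simp add: D_def)
  qed
  have "S t \<le> S 0"
  proof (rule DERIV_nonpos_imp_decreasing_open[OF t])
    fix x assume x: "0 < x" "x < t"
    have "(S has_real_derivative D x) (at x within {0<..})"
      using W[of x] x by (auto intro: DERIV_subset)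
    then have "(S has_real_derivative D x) (at x)"
      using at_within_open[of x "{0<..}"] x by simp
    then show "\<exists>y. (S has_real_derivative y) (at x) \<and> y \<le> 0" using Dneg[of x] x by auto
  next
    show "continuous_on {0..t} S"
    proof (rule continuous_at_imp_continuous_within[THEN continuous_within_subset] continuous_on_eq_continuous_within[THEN iffD2], intro ballI)
      fix x assume x: "x \<in> {0..t}"
      then have "continuous (at x within {0..}) S"
        using W[of x] by (auto intro: DERIV_continuous)
      then show "continuous (at x within {0..t}) S"
        by (rule continuous_within_subset) auto
    qed
  qed
  then show ?thesis by (simp add: S_def)
qed



lemma Phi_facts:
  fixes \<Phi> :: "real \<Rightarrow> real"
  assumes Phi_C1: "\<exists>\<Phi>'. (\<forall>x\<ge>0. (\<Phi> has_real_derivative \<Phi>' x) (at x within {0..})) \<and> continuous_on {0..} \<Phi>'"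
    and Phi_supp: "\<exists>R. \<forall>x\<ge>R. \<Phi> x = 0"
  shows "\<exists>R P L. R \<ge> 1 \<and> P \<ge> 0 \<and> L \<ge> 0 \<and> (\<forall>x\<ge>R. \<Phi> x = 0) \<and> (\<forall>x\<ge>0. \<bar>\<Phi> x\<bar> \<le> P)
     \<and> (\<forall>x\<ge>0. \<forall>y\<ge>0. \<bar>\<Phi> x - \<Phi> y\<bar> \<le> L * \<bar>x - y\<bar>) \<and> continuous_on {0..} \<Phi>"
proof -
  obtain \<Phi>' where d: "\<And>x. x \<ge> 0 \<Longrightarrow> (\<Phi> has_real_derivative \<Phi>' x) (at x within {0..})"
    and cd: "continuous_on {0..} \<Phi>'" using Phi_C1 by blast
  obtain R0 where R0: "\<And>x. x \<ge> R0 \<Longrightarrow> \<Phi> x = 0" using Phi_supp by blast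
  define R where "R = max 1 R0"
  have R1: "R \<ge> 1" and RR: "\<And>x. x \<ge> R \<Longrightarrow> \<Phi> x = 0" using R0 by (auto simp: R_def)
  have cont: "continuous_on {0..} \<Phi>"
    unfolding continuous_on_eq_continuous_within
    using d by (auto intro: DERIV_continuous)
  have "compact (\<Phi> ` {0..R})"
    by (rule compact_continuous_image) (auto intro: continuous_on_subset[OF cont])
  then obtain a where a: "\<And>x. x \<in> {0..R} \<Longrightarrow> norm (\<Phi> x) \<le> a"
    using compact_imp_bounded bounded_iff by (metis imageI)
  define P where "P = max 0 a"
  have P: "\<forall>x\<ge>0. \<bar>\<Phi> x\<bar> \<le> P"
  proof (intro allI impI)
    fix x :: real assume "x \<ge> 0"
    show "\<bar>\<Phi> x\<bar> \<le> P"
    proof (cases "x \<le> R")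
      case True then show ?thesis using a[of x] \<open>x \<ge> 0\<close> by (auto simp: P_def)
    next
      case False then show ?thesis using RR[of x] by (simp add: P_def)
    qed
  qed
  have "compact (\<Phi>' ` {0..R+1})"
    by (rule compact_continuous_image) (auto intro: continuous_on_subset[OF cd])
  then obtain b where b: "\<And>x. x \<in> {0..R+1} \<Longrightarrow> norm (\<Phi>' x) \<le> b"
    using compact_imp_bounded bounded_iff by (metis imageI)
  define L where "L = max 0 b"
  have loc: "\<bar>\<Phi> x - \<Phi> y\<bar> \<le> L * \<bar>x - y\<bar>" if "x \<in> {0..R+1}" "y \<in> {0..R+1}" for x y
  proof -
    have "norm (\<Phi> x - \<Phi> y) \<le> L * norm (x - y)"
    proof (rule field_differentiable_bound[where S="{0..R+1}" and f'=\<Phi>'])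
      show "convex {0..R+1::real}" by simp
      show "(\<Phi> has_field_derivative \<Phi>' z) (at z within {0..R+1})" if "z \<in> {0..R+1}" for z
        using d[of z] that by (auto intro: DERIV_subset)
      show "norm (\<Phi>' z) \<le> L" if "z \<in> {0..R+1}" for z using b[OF that] by (simp add: L_def)
    qed (use that in auto)
    then show ?thesis by simp
  qed
  have Lip: "\<forall>x\<ge>0. \<forall>y\<ge>0. \<bar>\<Phi> x - \<Phi> y\<bar> \<le> L * \<bar>x - y\<bar>"
  proof (intro allI impI)
    fix x y :: real assume xy: "x \<ge> 0" "y \<ge> 0"
    have L0: "L \<ge> 0" by (simp add: L_def)
    consider "x \<ge> R \<and> y \<ge> R" | "x \<le> R+1 \<and> y \<le> R+1" | "x < R \<and> y > R+1" | "y < R \<and> x > R+1" by linarith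
    then show "\<bar>\<Phi> x - \<Phi> y\<bar> \<le> L * \<bar>x - y\<bar>"
    proof cases
      case 1 then show ?thesis using RR[of x] RR[of y] L0 by simp
    next
      case 2 then show ?thesis using loc xy by auto
    next
      case 3
      have "\<bar>\<Phi> x - \<Phi> R\<bar> \<le> L * \<bar>x - R\<bar>" using loc[of x R] 3 xy R1 by auto
      also have "\<dots> \<le> L * \<bar>x - y\<bar>" using 3 L0 by (intro mult_left_mono) auto
      finally show ?thesis using RR[of R] RR[of y] 3 by simp
    next
      case 4
      have "\<bar>\<Phi> y - \<Phi> R\<bar> \<le> L * \<bar>y - R\<bar>" using loc[of y R] 4 xy R1 by auto
      also have "\<dots> \<le> L * \<bar>x - y\<bar>" using 4 L0 by (intro mult_left_mono) auto
      finally show ?thesis using RR[of R] RR[of x] 4 by simp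
    qed
  qed
  show ?thesis
    by (rule exI[of _ R], rule exI[of _ P], rule exI[of _ L]) (use R1 RR P Lip cont in \<open>auto simp: P_def L_def\<close>)
qed




lemma measure_Lam: "0 < e \<Longrightarrow> measure lborel (Lam e i) = e"
  by (simp add: Lam_def algebra_simps)

lemma emeasure_Lam2: "0 < e \<Longrightarrow> emeasure (lborel::(real\<times>real) measure) (Lam e i \<times> Lam e j) = ennreal (e*e)"
proof -
  assume e: "0 < e"
  have "emeasure (lborel::(real\<times>real) measure) (Lam e i \<times> Lam e j) = emeasure (lborel \<Otimes>\<^sub>M lborel) (Lam e i \<times> Lam e j)"
    by (simp add: lborel_prod)
  also have "\<dots> = emeasure lborel (Lam e i) * emeasure lborel (Lam e j)"
    by (rule lborel.emeasure_pair_measure_Times) auto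
  also have "\<dots> = ennreal (e*e)" using e by (simp add: Lam_def algebra_simps ennreal_mult)
  finally show ?thesis .
qed

lemma kd_le:
  fixes K :: "real \<Rightarrow> real \<Rightarrow> real"
  assumes e: "0 < e" and B: "0 \<le> B" and bnd: "\<And>x y. x \<in> Lam e i \<Longrightarrow> y \<in> Lam e j \<Longrightarrow> K x y \<le> B"
  shows "kd K e i j \<le> e * B"
proof -
  let ?A = "Lam e i \<times> Lam e j"
  have "?A \<in> sets (borel \<Otimes>\<^sub>M borel)" by (rule pair_measureI) simp_all
  then have Am: "?A \<in> sets (lborel::(real\<times>real) measure)" by (metis borel_prod sets_lborel)
  have intI: "integrable (lborel::(real\<times>real) measure) (indicator ?A :: real\<times>real \<Rightarrow> real)"
    by (rule integrable_real_indicator[OF Am]) (simp add: emeasure_Lam2[OF e])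
  have intg: "integrable (lborel::(real\<times>real) measure) (\<lambda>p. indicator ?A p * B)"
    using integrable_mult_left[OF intI, of B] by (simp add: mult.commute)
  have "(LINT p:?A|lborel. K (fst p) (snd p)) = (\<integral>p. indicator ?A p * K (fst p) (snd p) \<partial>lborel)"
    by (simp add: set_lebesgue_integral_def)
  also have "\<dots> \<le> (\<integral>p. indicator ?A p * B \<partial>lborel)"
  proof (rule integral_mono_AE'[OF intg])
    show "AE p in lborel. indicator ?A p * K (fst p) (snd p) \<le> indicator ?A p * B"
      by (rule AE_I2) (auto simp: indicator_def bnd mem_Times_iff)
    show "AE p in lborel. 0 \<le> indicator ?A p * B" by (rule AE_I2) (simp add: B)
  qed
  also have "\<dots> = measure lborel ?A * B"
    by simp
  also have "\<dots> = e * e * B" using e by (simp add: measure_def emeasure_Lam2)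
  finally have I: "(LINT p:?A|lborel. K (fst p) (snd p)) \<le> e * e * B" .
  have "kd K e i j = (1/e) * (LINT p:?A|lborel. K (fst p) (snd p))" by (simp add: kd_def)
  also have "\<dots> \<le> (1/e) * (e * e * B)" using I e by (intro mult_left_mono) auto
  also have "\<dots> = e * B" using e by simp
  finally show ?thesis .
qed

lemma kd_nonneg:
  fixes K :: "real \<Rightarrow> real \<Rightarrow> real"
  assumes e: "0 < e" and bnd: "\<And>x y. x \<in> Lam e i \<Longrightarrow> y \<in> Lam e j \<Longrightarrow> 0 \<le> K x y"
  shows "0 \<le> kd K e i j"
proof -
  have "0 \<le> (LINT p:(Lam e i \<times> Lam e j)|lborel. K (fst p) (snd p))"
    unfolding set_lebesgue_integral_def
    by (rule integral_nonneg_AE, rule AE_I2) (auto simp: indicator_def bnd mem_Times_iff)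
  then show ?thesis using e by (simp add: kd_def)
qed



lemma lip_bounded:
  fixes K :: "real \<Rightarrow> real \<Rightarrow> real"
  assumes lip: "\<forall>R>0. \<exists>L. L-lipschitz_on ({0..R} \<times> {0..R}) (\<lambda>p. K (fst p) (snd p))" and Rm: "Rm > 0"
  shows "\<exists>B. \<forall>x\<in>{0..Rm}. \<forall>y\<in>{0..Rm}. \<bar>K x y\<bar> \<le> B"
proof -
  obtain L where "L-lipschitz_on ({0..Rm} \<times> {0..Rm}) (\<lambda>p. K (fst p) (snd p))" using lip Rm by blast
  then have c: "continuous_on ({0..Rm} \<times> {0..Rm}) (\<lambda>p. K (fst p) (snd p))"
    by (rule lipschitz_on_continuous_on)
  have "compact ((\<lambda>p. K (fst p) (snd p)) ` ({0..Rm} \<times> {0..Rm}))"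
    by (rule compact_continuous_image[OF c]) (intro compact_Times; simp)
  then obtain a where a: "\<And>p. p \<in> {0..Rm} \<times> {0..Rm} \<Longrightarrow> norm (K (fst p) (snd p)) \<le> a"
    using compact_imp_bounded bounded_iff by (metis (no_types, lifting) imageI)
  show ?thesis by (rule exI[of _ a]) (use a in force)
qed

lemma K_growth:
  fixes K :: "real \<Rightarrow> real \<Rightarrow> real"
  assumes K_sym: "\<forall>x\<ge>0. \<forall>y\<ge>0. K x y = K y x"
    and lip: "\<forall>R>0. \<exists>L. L-lipschitz_on ({0..R} \<times> {0..R}) (\<lambda>p. K (fst p) (snd p))"
    and CH1: "\<forall>R\<ge>1. ((\<lambda>y. SUP x\<in>{0..R}. K x y / y) \<longlongrightarrow> 0) at_top"
    and R2: "R2 \<ge> 1"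
  shows "\<exists>A\<ge>0. \<forall>x\<ge>0. \<forall>y\<in>{0..R2}. K x y \<le> A * (1 + x)"
proof -
  have "eventually (\<lambda>y. (SUP x\<in>{0..R2}. K x y / y) < 1) at_top"
    using CH1 R2 by (auto intro: order_tendstoD)
  then obtain X where X: "\<And>y. y \<ge> X \<Longrightarrow> (SUP x\<in>{0..R2}. K x y / y) < 1"
    by (auto simp: eventually_at_top_linorder)
  define X' where "X' = max X R2"
  have X'1: "X' \<ge> 1" using R2 by (simp add: X'_def)
  have big: "K x y \<le> y" if x: "x \<in> {0..R2}" and y: "y \<ge> X'" for x y
  proof -
    obtain B where B: "\<forall>u\<in>{0..y}. \<forall>v\<in>{0..y}. \<bar>K u v\<bar> \<le> B"
      using lip_bounded[OF lip, of y] y X'1 by auto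
    have ypos: "y > 0" using y X'1 by simp
    have "bdd_above ((\<lambda>x. K x y / y) ` {0..R2})"
    proof (rule bdd_aboveI2)
      fix u assume u: "u \<in> {0..R2}"
      have "u \<le> y" using u y by (auto simp: X'_def)
      then have "K u y \<le> B" using B u ypos by (metis abs_le_D1 atLeastAtMost_iff less_eq_real_def)
      then show "K u y / y \<le> B / y" using ypos by (simp add: divide_right_mono)
    qed
    then have "K x y / y \<le> (SUP x\<in>{0..R2}. K x y / y)" using x by (rule cSUP_upper2) simp
    also have "\<dots> < 1" using X[of y] y by (simp add: X'_def)
    finally show ?thesis using ypos by (simp add: divide_less_eq)
  qed
  obtain B where B: "\<forall>u\<in>{0..X'}. \<forall>v\<in>{0..X'}. \<bar>K u v\<bar> \<le> B"
    using lip_bounded[OF lip, of X'] X'1 by auto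
  define A where "A = max 1 B"
  have "\<forall>x\<ge>0. \<forall>y\<in>{0..R2}. K x y \<le> A * (1 + x)"
  proof (intro allI impI ballI)
    fix x y :: real assume x: "x \<ge> 0" and y: "y \<in> {0..R2}"
    show "K x y \<le> A * (1 + x)"
    proof (cases "x \<ge> X'")
      case True
      have "K x y = K y x" using K_sym x y by auto
      also have "\<dots> \<le> x" using big[OF y True] .
      also have "\<dots> \<le> A * (1 + x)" using x by (simp add: A_def) (smt (verit) mult_le_cancel_right1 max.cobounded1)
      finally show ?thesis .
    next
      case False
      have "y \<le> X'" using y by (auto simp: X'_def)
      then have "K x y \<le> B" using B x y False by (metis abs_le_D1 atLeastAtMost_iff linorder_not_le less_eq_real_def)
      also have "B \<le> A * 1" by (simp add: A_def)
      also have "\<dots> \<le> A * (1 + x)" using x by (intro mult_left_mono) (auto simp: A_def)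
      finally show ?thesis .
    qed
  qed
  then show ?thesis by (intro exI[of _ A]) (simp add: A_def)
qed

lemma C_bound:
  fixes C :: "real \<Rightarrow> real \<Rightarrow> real"
  assumes lip: "\<forall>R>0. \<exists>L. L-lipschitz_on ({0..R} \<times> {0..R}) (\<lambda>p. C (fst p) (snd p))"
    and CH2: "\<exists>\<M>\<ge>1. \<forall>R\<ge>1. \<forall>x\<in>{0..R}. \<forall>y\<ge>R. C x y \<le> \<M>"
    and R2: "R2 \<ge> 1"
  shows "\<exists>M\<ge>0. \<forall>x\<in>{0..R2}. \<forall>y\<ge>0. C x y \<le> M"
proof -
  obtain \<M> where M: "\<M> \<ge> 1" "\<forall>R\<ge>1. \<forall>x\<in>{0..R}. \<forall>y\<ge>R. C x y \<le> \<M>" using CH2 by blast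
  obtain B where B: "\<forall>u\<in>{0..R2}. \<forall>v\<in>{0..R2}. \<bar>C u v\<bar> \<le> B"
    using lip_bounded[OF lip, of R2] R2 by auto
  show ?thesis
  proof (intro exI[of _ "max \<M> B"] conjI ballI allI impI)
    show "0 \<le> max \<M> B" using M by simp
    fix x y :: real assume x: "x \<in> {0..R2}" and y: "y \<ge> 0"
    show "C x y \<le> max \<M> B"
    proof (cases "y \<ge> R2")
      case True then show ?thesis using M(2) R2 x by (meson max.coboundedI1)
    next
      case False then have "\<bar>C x y\<bar> \<le> B" using B x y by auto
      then show ?thesis by linarith
    qed
  qed
qed

lemma sum_shift1: "(\<Sum>i=1..N. f i) = (\<Sum>n<N. f (Suc n))"
  by (induct N) auto

lemma suminf_abs_bound:
  fixes f :: "nat \<Rightarrow> real"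
  assumes "summable f" "\<And>N. \<bar>\<Sum>n<N. f n\<bar> \<le> B"
  shows "\<bar>suminf f\<bar> \<le> B"
proof -
  have "(\<lambda>N. \<bar>\<Sum>n<N. f n\<bar>) \<longlonglongrightarrow> \<bar>suminf f\<bar>"
    using summable_LIMSEQ[OF assms(1)] by (rule tendsto_rabs)
  then show ?thesis by (rule LIMSEQ_le_const2) (use assms(2) in auto)
qed

lemma sum_sub_shift:
  fixes f :: "nat \<Rightarrow> real"
  assumes "\<And>k. 1 \<le> k \<Longrightarrow> 0 \<le> f k" "1 \<le> i"
  shows "(\<Sum>m<K. f (m + i)) \<le> (\<Sum>k=1..K+i. f k)"
proof -
  have "(\<Sum>m<K. f (m + i)) = (\<Sum>k\<in>(\<lambda>m. m + i) ` {..<K}. f k)"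
    by (subst sum.reindex) (auto simp: inj_on_def)
  also have "\<dots> \<le> (\<Sum>k=1..K+i. f k)"
    by (rule sum_mono2) (use assms in auto)
  finally show ?thesis .
qed

lemma phi_int:
  fixes \<Phi> :: "real \<Rightarrow> real"
  assumes cont: "continuous_on {0..} \<Phi>" and e: "0 < e" and i: "1 \<le> i" and s: "0 \<le> s"
  shows "integrable lborel (\<lambda>x. indicator (Lam e i) x * \<Phi> (s + x))"
proof -
  let ?a = "(real i - 1/2)*e" and ?b = "(real i + 1/2)*e"
  have a0: "?a > 0" using i e by simp
  have "continuous_on {?a..?b} (\<lambda>x. \<Phi> (s + x))"
    by (rule continuous_on_compose2[OF cont]) (use a0 s in \<open>auto intro!: continuous_intros\<close>)
  then have "integrable lborel (\<lambda>x. indicator {?a..?b} x *\<^sub>R \<Phi> (s + x))"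
    by (intro borel_integrable_compact) auto
  then have "integrable lborel (\<lambda>x. (indicator {?a..?b} x *\<^sub>R \<Phi> (s + x)) * indicator (Lam e i) x)"
    by (rule integrable_real_mult_indicator[rotated]) simp
  moreover have "(\<lambda>x. (indicator {?a..?b} x *\<^sub>R \<Phi> (s + x)) * indicator (Lam e i) x) = (\<lambda>x. indicator (Lam e i) x * \<Phi> (s + x))"
    by (rule ext) (auto simp: indicator_def Lam_def)
  ultimately show ?thesis by (metis (no_types))
qed

lemma phi_abs:
  fixes \<Phi> :: "real \<Rightarrow> real"
  assumes e: "0 < e" and i: "1 \<le> i" and P: "\<forall>x\<ge>0. \<bar>\<Phi> x\<bar> \<le> P"
  shows "\<bar>LINT x:Lam e i|lborel. \<Phi> x\<bar> \<le> e * P"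
proof -
  have P0: "0 \<le> P" using P by force
  have "integrable lborel (indicator (Lam e i) :: real \<Rightarrow> real)"
    by (rule integrable_real_indicator) (use e in \<open>auto simp: Lam_def algebra_simps\<close>)
  then have intI: "integrable lborel (\<lambda>x. indicator (Lam e i) x * P)"
    using integrable_mult_left[of P lborel "indicator (Lam e i)"] by simp
  have "\<bar>LINT x:Lam e i|lborel. \<Phi> x\<bar> = norm (\<integral>x. indicator (Lam e i) x * \<Phi> x \<partial>lborel)"
    by (simp add: set_lebesgue_integral_def)
  also have "\<dots> \<le> (\<integral>x. norm (indicator (Lam e i) x * \<Phi> x) \<partial>lborel)"
    by (rule integral_norm_bound)
  also have "\<dots> \<le> (\<integral>x. indicator (Lam e i) x * P \<partial>lborel)"
  proof (rule integral_mono_AE'[OF intI])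
    show "AE x in lborel. norm (indicator (Lam e i) x * \<Phi> x) \<le> indicator (Lam e i) x * P"
    proof (rule AE_I2)
      fix x show "norm (indicator (Lam e i) x * \<Phi> x) \<le> indicator (Lam e i) x * P"
        using P Lam_pos[OF e i, of x] by (auto simp: indicator_def abs_mult less_imp_le)
    qed
    show "AE x in lborel. 0 \<le> indicator (Lam e i) x * P" using P0 by simp
  qed
  also have "\<dots> = e * P" using e by (simp add: Lam_def algebra_simps)
  finally show ?thesis .
qed

lemma phi_diff:
  fixes \<Phi> :: "real \<Rightarrow> real"
  assumes cont: "continuous_on {0..} \<Phi>" and e: "0 < e" and i: "1 \<le> i"
    and Lip: "\<forall>x\<ge>0. \<forall>y\<ge>0. \<bar>\<Phi> x - \<Phi> y\<bar> \<le> L * \<bar>x - y\<bar>" and L0: "0 \<le> L"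
  shows "\<bar>(LINT x:Lam e (Suc i)|lborel. \<Phi> x) - (LINT x:Lam e i|lborel. \<Phi> x)\<bar> \<le> L * e * e"
proof -
  have ind: "indicator (Lam e (Suc i)) (e + x) = (indicator (Lam e i) x :: real)" for x
    by (auto simp: indicator_def Lam_def algebra_simps)
  have "(LINT x:Lam e (Suc i)|lborel. \<Phi> x) = (\<integral>x. indicator (Lam e (Suc i)) x * \<Phi> x \<partial>lborel)"
    by (simp add: set_lebesgue_integral_def)
  also have "\<dots> = \<bar>1\<bar> *\<^sub>R (\<integral>x. indicator (Lam e (Suc i)) (e + 1 * x) * \<Phi> (e + 1 * x) \<partial>lborel)"
    by (rule lborel_integral_real_affine) simp
  also have "\<dots> = (\<integral>x. indicator (Lam e i) x * \<Phi> (e + x) \<partial>lborel)"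
    by (simp add: ind)
  finally have sh: "(LINT x:Lam e (Suc i)|lborel. \<Phi> x) = (\<integral>x. indicator (Lam e i) x * \<Phi> (e + x) \<partial>lborel)" .
  have i1: "integrable lborel (\<lambda>x. indicator (Lam e i) x * \<Phi> (e + x))"
    using phi_int[OF cont e i, of e] e by simp
  have i0: "integrable lborel (\<lambda>x. indicator (Lam e i) x * \<Phi> x)"
    using phi_int[OF cont e i, of 0] by simp
  have "integrable lborel (indicator (Lam e i) :: real \<Rightarrow> real)"
    by (rule integrable_real_indicator) (use e in \<open>auto simp: Lam_def algebra_simps\<close>)
  then have intI: "integrable lborel (\<lambda>x. indicator (Lam e i) x * (L * e))"
    using integrable_mult_left[of "L * e" lborel "indicator (Lam e i)"] by simp
  have "(LINT x:Lam e (Suc i)|lborel. \<Phi> x) - (LINT x:Lam e i|lborel. \<Phi> x)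
      = (\<integral>x. indicator (Lam e i) x * \<Phi> (e + x) - indicator (Lam e i) x * \<Phi> x \<partial>lborel)"
    unfolding sh by (simp add: set_lebesgue_integral_def Bochner_Integration.integral_diff[OF i1 i0])
  then have "\<bar>(LINT x:Lam e (Suc i)|lborel. \<Phi> x) - (LINT x:Lam e i|lborel. \<Phi> x)\<bar>
      = norm (\<integral>x. indicator (Lam e i) x * \<Phi> (e + x) - indicator (Lam e i) x * \<Phi> x \<partial>lborel)" by simp
  also have "\<dots> \<le> (\<integral>x. norm (indicator (Lam e i) x * \<Phi> (e + x) - indicator (Lam e i) x * \<Phi> x) \<partial>lborel)"
    by (rule integral_norm_bound)
  also have "\<dots> \<le> (\<integral>x. indicator (Lam e i) x * (L * e) \<partial>lborel)"
  proof (rule integral_mono_AE'[OF intI])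
    show "AE x in lborel. norm (indicator (Lam e i) x * \<Phi> (e + x) - indicator (Lam e i) x * \<Phi> x) \<le> indicator (Lam e i) x * (L * e)"
    proof (rule AE_I2)
      fix x show "norm (indicator (Lam e i) x * \<Phi> (e + x) - indicator (Lam e i) x * \<Phi> x) \<le> indicator (Lam e i) x * (L * e)"
      proof (cases "x \<in> Lam e i")
        case True
        then have "x > 0" using Lam_pos[OF e i] by blast
        then have "\<bar>\<Phi> (e + x) - \<Phi> x\<bar> \<le> L * \<bar>(e + x) - x\<bar>" using Lip e
          by (metis add_nonneg_nonneg less_imp_le)
        then show ?thesis using True e by simp
      qed simp
    qed
    show "AE x in lborel. 0 \<le> indicator (Lam e i) x * (L * e)" using L0 e by simp
  qed
  also have "\<dots> = L * e * e" using e by (simp add: Lam_def algebra_simps)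
  finally show ?thesis .
qed

lemma phi_zero:
  fixes \<Phi> :: "real \<Rightarrow> real"
  assumes e: "0 < e" "e < 1" and i: "1 \<le> i" and RR: "\<forall>x\<ge>R. \<Phi> x = 0" and big: "R + 1 \<le> real i * e"
  shows "indicator (Lam e i) x * \<Phi> x = 0" and "(LINT x:Lam e i|lborel. \<Phi> x) = 0"
proof -
  have *: "indicator (Lam e i) x * \<Phi> x = 0" for x
  proof (cases "x \<in> Lam e i")
    case True
    then have "(real i - 1/2)*e \<le> x" by (simp add: Lam_def)
    then have "x \<ge> R" using big e by (simp add: algebra_simps)
    then show ?thesis using RR by simp
  qed simp
  show "indicator (Lam e i) x * \<Phi> x = 0" by (rule *)
  show "(LINT x:Lam e i|lborel. \<Phi> x) = 0"
  proof -
    have z: "(\<lambda>x. indicator (Lam e i) x *\<^sub>R \<Phi> x) = (\<lambda>_. 0::real)" by (rule ext) (simp only: real_scaleR_def *)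
    show ?thesis unfolding set_lebesgue_integral_def z by simp
  qed
qed


lemma at_within_Ici_nonbot: "(t::real) \<ge> 0 \<Longrightarrow> at t within {0..} \<noteq> bot"
proof
  assume t: "t \<ge> 0" and b: "at t within {0..} = bot"
  have "at_right t \<le> at t within {0..}"
    by (rule filter_leI) (use t in \<open>auto simp: eventually_at_filter elim!: eventually_mono\<close>)
  with b have "at_right t = bot" by (simp add: bot_unique)
  then show False using trivial_limit_at_right_real[of t] by metis
qed


theorem lemma3p3:
  fixes K C :: "real \<Rightarrow> real \<Rightarrow> real" and \<alpha> \<beta> :: real
    and fin :: "real \<Rightarrow> real"
    and c :: "real \<Rightarrow> real \<Rightarrow> nat \<Rightarrow> real"
    and \<Phi> :: "real \<Rightarrow> real" and T :: real
  assumes K_nonneg: "\<forall>x\<ge>0. \<forall>y\<ge>0. K x y \<ge> 0"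
    and C_nonneg: "\<forall>x\<ge>0. \<forall>y\<ge>0. C x y \<ge> 0"
    and K_sym: "\<forall>x\<ge>0. \<forall>y\<ge>0. K x y = K y x"
    and C_sym: "\<forall>x\<ge>0. \<forall>y\<ge>0. C x y = C y x"
    and K_W1inf_loc: "\<forall>R>0. \<exists>L. L-lipschitz_on ({0..R} \<times> {0..R}) (\<lambda>p. K (fst p) (snd p))"
    and C_W1inf_loc: "\<forall>R>0. \<exists>L. L-lipschitz_on ({0..R} \<times> {0..R}) (\<lambda>p. C (fst p) (snd p))"
    and \<alpha>_nonneg: "\<alpha> \<ge> 0" and \<beta>_nonneg: "\<beta> \<ge> 0"
    and K_dx: "AE p in (lborel :: (real \<times> real) measure). fst p > 0 \<and> snd p > 0 \<longrightarrow>
                 (\<forall>D. ((\<lambda>x. K x (snd p)) has_real_derivative D) (at (fst p)) \<longrightarrow> D \<ge> - \<alpha>)"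
    and C_dx: "AE p in (lborel :: (real \<times> real) measure). fst p > 0 \<and> snd p > 0 \<longrightarrow>
                 (\<forall>D. ((\<lambda>x. C x (snd p)) has_real_derivative D) (at (fst p)) \<longrightarrow> D \<ge> - \<beta>)"
    and CH1: "\<forall>R\<ge>1. ((\<lambda>y. SUP x\<in>{0..R}. K x y / y) \<longlongrightarrow> 0) at_top"
    and CH2: "\<exists>\<M>\<ge>1. \<forall>R\<ge>1. \<forall>x\<in>{0..R}. \<forall>y\<ge>R. C x y \<le> \<M>"
    and fin_L1: "set_integrable lborel {0<..} (\<lambda>x. (1 + x) * fin x)"
    and fin_nonneg: "AE x in lborel. x > 0 \<longrightarrow> fin x \<ge> 0"
    (* standing assumption: c eps is a solution of the eps-discrete system for every eps in (0,1) *)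
    and c0: "\<forall>\<epsilon>\<in>{0<..<1}. \<forall>t\<ge>0. c \<epsilon> t 0 = 0"
    and c_nonneg: "\<forall>\<epsilon>\<in>{0<..<1}. \<forall>t\<ge>0. \<forall>i\<ge>1. c \<epsilon> t i \<ge> 0"
    and c_init: "\<forall>\<epsilon>\<in>{0<..<1}. \<forall>i\<ge>1. c \<epsilon> 0 i = cin fin \<epsilon> i"
    and c_series: "\<forall>\<epsilon>\<in>{0<..<1}. \<forall>t\<ge>0. \<forall>i\<ge>1.
         summable (\<lambda>n. kd K \<epsilon> i (n + i) * c \<epsilon> t i * c \<epsilon> t (n + i))
       \<and> summable (\<lambda>n. real (n + (i - 1)) * kd C \<epsilon> (i - 1) (n + (i - 1)) * c \<epsilon> t (n + (i - 1)))
       \<and> summable (\<lambda>n. real (n + i) * kd C \<epsilon> i (n + i) * c \<epsilon> t (n + i))"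
    and c_ode: "\<forall>\<epsilon>\<in>{0<..<1}. \<forall>i\<ge>1. \<forall>t\<ge>0.
         ((\<lambda>s. c \<epsilon> s i) has_real_derivative disc_rhs (kd K \<epsilon>) (kd C \<epsilon>) (c \<epsilon> t) i) (at t within {0..})"
    and c_C1: "\<forall>\<epsilon>\<in>{0<..<1}. \<forall>i\<ge>1.
         continuous_on {0..} (\<lambda>t. disc_rhs (kd K \<epsilon>) (kd C \<epsilon>) (c \<epsilon> t) i)"
    and c_weak: "\<forall>\<epsilon>\<in>{0<..<1}. \<forall>\<phi>::nat \<Rightarrow> real. finite {i. \<phi> i \<noteq> 0} \<longrightarrow> (\<forall>t\<ge>0.
         summable (\<lambda>n. wK (kd K \<epsilon>) (c \<epsilon> t) \<phi> (Suc n))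
       \<and> (\<forall>i\<ge>1. summable (\<lambda>m. wC (kd C \<epsilon>) (c \<epsilon> t) \<phi> i m))
       \<and> summable (\<lambda>n. \<Sum>m. wC (kd C \<epsilon>) (c \<epsilon> t) \<phi> (Suc n) m)
       \<and> ((\<lambda>s. \<Sum>i\<in>{i. \<phi> i \<noteq> 0 \<and> i \<ge> 1}. \<phi> i * c \<epsilon> s i) has_real_derivative
            (\<Sum>n. wK (kd K \<epsilon>) (c \<epsilon> t) \<phi> (Suc n))
          + (\<Sum>n. \<Sum>m. wC (kd C \<epsilon>) (c \<epsilon> t) \<phi> (Suc n) m)) (at t within {0..}))"
    and c_mass: "\<forall>\<epsilon>\<in>{0<..<1}. \<forall>t\<ge>0.
         summable (\<lambda>n. real (Suc n) * c \<epsilon> t (Suc n))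
       \<and> (\<Sum>n. real (Suc n) * c \<epsilon> t (Suc n)) \<le> (\<Sum>n. real (Suc n) * cin fin \<epsilon> (Suc n))"
    (* Phi in C^1_c([0,infinity)) and T > 0 *)
    and Phi_C1: "\<exists>\<Phi>'. (\<forall>x\<ge>0. (\<Phi> has_real_derivative \<Phi>' x) (at x within {0..})) \<and> continuous_on {0..} \<Phi>'"
    and Phi_supp: "\<exists>R. \<forall>x\<ge>R. \<Phi> x = 0"
    and T_pos: "T > 0"
  shows "\<exists>M. \<forall>\<epsilon>\<in>{0<..<1}.
           let g = (\<lambda>t. LINT x:{0<..}|lborel. feps \<epsilon> (c \<epsilon>) t x * \<Phi> x) in
           (\<forall>t\<in>{0..T}. \<bar>g t\<bar> \<le> M)
         \<and> (\<exists>h. set_integrable lborel {0..T} h \<and> (\<forall>t\<in>{0..T}. \<bar>h t\<bar> \<le> M)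
                \<and> (\<forall>s t. 0 \<le> s \<and> s \<le> t \<and> t \<le> T \<longrightarrow> g t - g s = (LINT \<tau>:{s..t}|lborel. h \<tau>)))"
proof -
  obtain R P L where R1: "R \<ge> 1" and P0: "P \<ge> 0" and L0: "L \<ge> 0" and RR: "\<forall>x\<ge>R. \<Phi> x = 0"
    and PB: "\<forall>x\<ge>0. \<bar>\<Phi> x\<bar> \<le> P" and Lip: "\<forall>x\<ge>0. \<forall>y\<ge>0. \<bar>\<Phi> x - \<Phi> y\<bar> \<le> L * \<bar>x - y\<bar>"
    and contP: "continuous_on {0..} \<Phi>"
    using Phi_facts[OF Phi_C1 Phi_supp] by blast
  obtain A where A0: "A \<ge> 0" and KA: "\<forall>x\<ge>0. \<forall>y\<in>{0..R+2}. K x y \<le> A * (1 + x)"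
    using K_growth[OF K_sym K_W1inf_loc CH1, of "R+2"] R1 by auto
  obtain MC where MC0: "MC \<ge> 0" and CM: "\<forall>x\<in>{0..R+2}. \<forall>y\<ge>0. C x y \<le> MC"
    using C_bound[OF C_W1inf_loc CH2, of "R+2"] R1 by auto
  define F where "F = (LINT x:{0<..}|lborel. (1+x) * fin x)"
  have F0: "0 \<le> F"
  proof -
    have aux: "0 \<le> 1 + x" if "1 \<le> i" "x \<in> Lam (1/2) i" for i x using Lam_pos[of "1/2" i x] that by simp
    show ?thesis using fin_bound[OF fin_L1 fin_nonneg, of "1/2" "\<lambda>_. 0" 0] aux by (simp add: F_def)
  qed
  define QK where "QK = ((R+1)*L + P) * A"
  have QK0: "QK \<ge> 0" using R1 L0 P0 A0 by (simp add: QK_def)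
  define MH where "MH = 3*QK*F*F + MC*(L+P)*F*F"
  define M where "M = max (P*F) MH"
  show ?thesis
  proof (rule exI[of _ M], intro ballI)
    fix \<epsilon> :: real assume eps: "\<epsilon> \<in> {0<..<1}"
    then have e0: "0 < \<epsilon>" and e1: "\<epsilon> < 1" by auto
    have cnn: "0 \<le> c \<epsilon> t i" if "t \<ge> 0" "1 \<le> i" for t i using c_nonneg eps that by auto
    have Kdnn: "0 \<le> kd K \<epsilon> i j" if "1 \<le> i" "1 \<le> j" for i j
    proof (rule kd_nonneg[OF e0])
      fix x y assume "x \<in> Lam \<epsilon> i" "y \<in> Lam \<epsilon> j"
      then have "x > 0" "y > 0" using Lam_pos[OF e0 that(1)] Lam_pos[OF e0 that(2)] by auto
      then show "0 \<le> K x y" using K_nonneg by auto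
    qed
    have Cdnn: "0 \<le> kd C \<epsilon> i j" if "1 \<le> i" "1 \<le> j" for i j
    proof (rule kd_nonneg[OF e0])
      fix x y assume "x \<in> Lam \<epsilon> i" "y \<in> Lam \<epsilon> j"
      then have "x > 0" "y > 0" using Lam_pos[OF e0 that(1)] Lam_pos[OF e0 that(2)] by auto
      then show "0 \<le> C x y" using C_nonneg by auto
    qed
    have weak: "\<forall>\<phi>::nat \<Rightarrow> real. finite {i. \<phi> i \<noteq> 0} \<longrightarrow> (\<forall>t\<ge>0.
         summable (\<lambda>n. wK (kd K \<epsilon>) (c \<epsilon> t) \<phi> (Suc n))
       \<and> (\<forall>i\<ge>1. summable (\<lambda>m. wC (kd C \<epsilon>) (c \<epsilon> t) \<phi> i m))
       \<and> summable (\<lambda>n. \<Sum>m. wC (kd C \<epsilon>) (c \<epsilon> t) \<phi> (Suc n) m)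
       \<and> ((\<lambda>s. \<Sum>i\<in>{i. \<phi> i \<noteq> 0 \<and> i \<ge> 1}. \<phi> i * c \<epsilon> s i) has_real_derivative
            (\<Sum>n. wK (kd K \<epsilon>) (c \<epsilon> t) \<phi> (Suc n))
          + (\<Sum>n. \<Sum>m. wC (kd C \<epsilon>) (c \<epsilon> t) \<phi> (Suc n) m)) (at t within {0..}))"
      using c_weak eps by blast
    have cin_e: "\<epsilon> * cin fin \<epsilon> i = (LINT x:Lam \<epsilon> i|lborel. fin x)" for i
      using e0 by (simp add: cin_def)
    have numb: "\<epsilon> * (\<Sum>i=1..N. c \<epsilon> t i) \<le> F" if t: "t \<ge> 0" for t N
    proof -
      have "(\<Sum>i=1..N. c \<epsilon> t i) \<le> (\<Sum>i=1..N. c \<epsilon> 0 i)"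
        by (rule number_mono[where Kd="kd K \<epsilon>" and Cd="kd C \<epsilon>", OF Kdnn Cdnn cnn weak t])
      also have "\<dots> = (\<Sum>i=1..N. cin fin \<epsilon> i)" using c_init eps by (intro sum.cong) auto
      finally have "\<epsilon> * (\<Sum>i=1..N. c \<epsilon> t i) \<le> \<epsilon> * (\<Sum>i=1..N. cin fin \<epsilon> i)"
        using e0 by (simp add: mult_left_mono)
      also have "\<dots> = (\<Sum>i=1..N. 1 * (LINT x:Lam \<epsilon> i|lborel. fin x))"
        by (simp add: sum_distrib_left cin_e)
      also have "\<dots> \<le> F" unfolding F_def
      proof (rule fin_bound[OF fin_L1 fin_nonneg e0])
        fix i x assume "1 \<le> i" "x \<in> Lam \<epsilon> i"
        then show "(1::real) \<le> 1 + x" using Lam_pos[OF e0] by force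
      qed simp
      finally show ?thesis .
    qed
    have cin_nn: "0 \<le> cin fin \<epsilon> i" if "1 \<le> i" for i
    proof -
      have "0 \<le> (LINT x:Lam \<epsilon> i|lborel. fin x)"
        unfolding set_lebesgue_integral_def
      proof (rule integral_nonneg_AE)
        show "AE x in lborel. 0 \<le> indicator (Lam \<epsilon> i) x *\<^sub>R fin x"
          using fin_nonneg
        proof eventually_elim
          case (elim x) then show ?case using Lam_pos[OF e0 that, of x] by (auto simp: indicator_def)
        qed
      qed
      then show ?thesis using e0 by (simp add: cin_def)
    qed
    have massin: "\<epsilon> * \<epsilon> * (\<Sum>i=1..N. real i * cin fin \<epsilon> i) \<le> F" for N
    proof -
      have "\<epsilon> * \<epsilon> * (\<Sum>i=1..N. real i * cin fin \<epsilon> i) = (\<Sum>i=1..N. (\<epsilon> * real i) * (LINT x:Lam \<epsilon> i|lborel. fin x))"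
        by (simp add: sum_distrib_left cin_e[symmetric] algebra_simps)
      also have "\<dots> \<le> F" unfolding F_def
      proof (rule fin_bound[OF fin_L1 fin_nonneg e0])
        fix i x assume i: "1 \<le> i" and x: "x \<in> Lam \<epsilon> i"
        have "(real i - 1/2) * \<epsilon> \<le> x" using x by (simp add: Lam_def)
        then show "\<epsilon> * real i \<le> 1 + x" using e1 by (simp add: algebra_simps)
      qed (use e0 in simp)
      finally show ?thesis .
    qed
    have summ_in: "summable (\<lambda>n. real (Suc n) * cin fin \<epsilon> (Suc n))"
      and sum_in_le: "(\<Sum>n. real (Suc n) * cin fin \<epsilon> (Suc n)) \<le> F / (\<epsilon> * \<epsilon>)"
    proof -
      have part: "(\<Sum>n<N. real (Suc n) * cin fin \<epsilon> (Suc n)) \<le> F / (\<epsilon> * \<epsilon>)" for N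
      proof -
        have "\<epsilon> * \<epsilon> * (\<Sum>n<N. real (Suc n) * cin fin \<epsilon> (Suc n)) \<le> F"
          using massin[of N] unfolding sum_shift1 by simp
        then show ?thesis using e0 by (simp add: field_simps)
      qed
      show "summable (\<lambda>n. real (Suc n) * cin fin \<epsilon> (Suc n))"
        by (rule summableI_nonneg_bounded[OF _ part]) (use cin_nn in simp)
      then show "(\<Sum>n. real (Suc n) * cin fin \<epsilon> (Suc n)) \<le> F / (\<epsilon> * \<epsilon>)"
        by (rule suminf_le_const[OF _ part])
    qed
    have massb: "\<epsilon> * \<epsilon> * (\<Sum>i=1..N. real i * c \<epsilon> t i) \<le> F" if t: "t \<ge> 0" for t N
    proof -
      have cm: "summable (\<lambda>n. real (Suc n) * c \<epsilon> t (Suc n))"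
        "(\<Sum>n. real (Suc n) * c \<epsilon> t (Suc n)) \<le> (\<Sum>n. real (Suc n) * cin fin \<epsilon> (Suc n))"
        using c_mass eps t by auto
      have "(\<Sum>i=1..N. real i * c \<epsilon> t i) = (\<Sum>n<N. real (Suc n) * c \<epsilon> t (Suc n))"
        by (rule sum_shift1)
      also have "\<dots> \<le> (\<Sum>n. real (Suc n) * c \<epsilon> t (Suc n))"
        by (rule sum_le_suminf[OF cm(1)]) (use cnn t in auto)
      also have "\<dots> \<le> F / (\<epsilon> * \<epsilon>)" using cm(2) sum_in_le by linarith
      finally show ?thesis using e0 by (simp add: field_simps)
    qed
    have numb': "\<epsilon> * (\<Sum>m<K. c \<epsilon> t (m + i)) \<le> F" if "t \<ge> 0" "1 \<le> i" for t K i
    proof -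
      have "(\<Sum>m<K. c \<epsilon> t (m + i)) \<le> (\<Sum>k=1..K+i. c \<epsilon> t k)"
        by (rule sum_sub_shift) (use cnn that in auto)
      then have "\<epsilon> * (\<Sum>m<K. c \<epsilon> t (m + i)) \<le> \<epsilon> * (\<Sum>k=1..K+i. c \<epsilon> t k)"
        using e0 by (simp add: mult_left_mono)
      then show ?thesis using numb[OF that(1), of "K+i"] by linarith
    qed
    have massb': "\<epsilon> * \<epsilon> * (\<Sum>m<K. real (m + i) * c \<epsilon> t (m + i)) \<le> F" if "t \<ge> 0" "1 \<le> i" for t K i
    proof -
      have "(\<Sum>m<K. real (m + i) * c \<epsilon> t (m + i)) \<le> (\<Sum>k=1..K+i. real k * c \<epsilon> t k)"
        by (rule sum_sub_shift[where f="\<lambda>k. real k * c \<epsilon> t k"]) (use cnn that in auto)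
      then have "\<epsilon> * \<epsilon> * (\<Sum>m<K. real (m + i) * c \<epsilon> t (m + i)) \<le> \<epsilon> * \<epsilon> * (\<Sum>k=1..K+i. real k * c \<epsilon> t k)"
        using e0 by (simp add: mult_left_mono)
      then show ?thesis using massb[OF that(1), of "K+i"] by linarith
    qed
    have numbS: "\<epsilon> * (\<Sum>n<N. c \<epsilon> t (Suc n)) \<le> F" if "t \<ge> 0" for t N
      using numb[OF that, of N] unfolding sum_shift1 .
    have massbS: "\<epsilon> * \<epsilon> * (\<Sum>n<N. real (Suc n) * c \<epsilon> t (Suc n)) \<le> F" if "t \<ge> 0" for t N
      using massb[OF that, of N] unfolding sum_shift1 .
    define phi where "phi i = (if i = 0 then 0 else LINT x:Lam \<epsilon> i|lborel. \<Phi> x)" for i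
    have phiA: "\<bar>phi i\<bar> \<le> \<epsilon> * P" for i
      using phi_abs[OF e0 _ PB, of i] e0 P0 by (cases "i = 0") (auto simp: phi_def)
    have phiD: "\<bar>phi (i+1) - phi i\<bar> \<le> L * \<epsilon> * \<epsilon>" if "1 \<le> i" for i
      using phi_diff[OF contP e0 that Lip L0] that by (simp add: phi_def)
    have phiZ: "phi i = 0" if "1 \<le> i" "R + 1 \<le> real i * \<epsilon>" for i
      using phi_zero(2)[OF e0 e1 that(1) RR that(2)] that by (simp add: phi_def)
    define N0 where "N0 = nat \<lceil>(R+1)/\<epsilon>\<rceil>"
    have bigN0: "R + 1 \<le> real i * \<epsilon>" if "N0 < i" for i
    proof -
      have "(R+1)/\<epsilon> \<le> real N0" unfolding N0_def by linarith
      also have "\<dots> \<le> real i" using that by simp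
      finally show ?thesis using e0 by (simp add: field_simps)
    qed
    have finsupp: "{i. phi i \<noteq> 0} \<subseteq> {1..N0}"
    proof
      fix i assume "i \<in> {i. phi i \<noteq> 0}"
      then have "phi i \<noteq> 0" by simp
      then have "i \<noteq> 0" by (cases "i = 0") (simp_all add: phi_def)
      moreover have "\<not> N0 < i" using phiZ bigN0 \<open>phi i \<noteq> 0\<close> \<open>i \<noteq> 0\<close> by fastforce
      ultimately show "i \<in> {1..N0}" by auto
    qed
    have finphi: "finite {i. phi i \<noteq> 0}" using finsupp by (rule finite_subset) simp
    have Sset: "(\<Sum>i\<in>{i. phi i \<noteq> 0 \<and> i \<ge> 1}. phi i * c \<epsilon> s i) = (\<Sum>i=1..N0. phi i * c \<epsilon> s i)" for s
      by (rule sum.mono_neutral_left) (use finsupp in auto)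
    define G where "G s = (\<Sum>i=1..N0. phi i * c \<epsilon> s i)" for s
    have gform: "(LINT x:{0<..}|lborel. feps \<epsilon> (c \<epsilon>) t x * \<Phi> x) = G t" for t
    proof -
      have pt: "indicator {0<..} x * (feps \<epsilon> (c \<epsilon>) t x * \<Phi> x) = (\<Sum>n<N0. c \<epsilon> t (Suc n) * (indicator (Lam \<epsilon> (Suc n)) x * \<Phi> x))" for x
      proof (cases "\<Phi> x = 0")
        case True then show ?thesis by simp
      next
        case False
        have z: "c \<epsilon> t (Suc n) * indicator (Lam \<epsilon> (Suc n)) x = 0" if "n \<notin> {..<N0}" for n
        proof -
          have "R + 1 \<le> real (Suc n) * \<epsilon>" using bigN0[of "Suc n"] that by simp
          then have "indicator (Lam \<epsilon> (Suc n)) x * \<Phi> x = 0" using phi_zero(1)[OF e0 e1 _ RR, of "Suc n"] by simp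
          with False show ?thesis by simp
        qed
        have fe: "feps \<epsilon> (c \<epsilon>) t x = (\<Sum>n<N0. c \<epsilon> t (Suc n) * indicator (Lam \<epsilon> (Suc n)) x)"
          unfolding feps_def by (rule suminf_finite) (use z in auto)
        show ?thesis unfolding fe sum_distrib_right sum_distrib_left
        proof (intro sum.cong refl)
          fix n
          show "indicator {0<..} x * (c \<epsilon> t (Suc n) * indicator (Lam \<epsilon> (Suc n)) x * \<Phi> x) = c \<epsilon> t (Suc n) * (indicator (Lam \<epsilon> (Suc n)) x * \<Phi> x)"
          proof (cases "x \<in> Lam \<epsilon> (Suc n)")
            case True
            then have "x > 0" using Lam_pos[OF e0, of "Suc n" x] by simp
            then show ?thesis using True by simp
          qed simp
        qed
      qed
      have intn: "integrable lborel (\<lambda>x. c \<epsilon> t (Suc n) * (indicator (Lam \<epsilon> (Suc n)) x * \<Phi> x))" for n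
        by (intro integrable_mult_right) (use phi_int[OF contP e0, of "Suc n" 0] in simp)
      have "(LINT x:{0<..}|lborel. feps \<epsilon> (c \<epsilon>) t x * \<Phi> x) = (\<integral>x. (\<Sum>n<N0. c \<epsilon> t (Suc n) * (indicator (Lam \<epsilon> (Suc n)) x * \<Phi> x)) \<partial>lborel)"
        unfolding set_lebesgue_integral_def by (simp only: real_scaleR_def pt)
      also have "\<dots> = (\<Sum>n<N0. c \<epsilon> t (Suc n) * phi (Suc n))"
        using Bochner_Integration.integral_sum[where I="{..<N0}" and f="\<lambda>n x. c \<epsilon> t (Suc n) * (indicator (Lam \<epsilon> (Suc n)) x * \<Phi> x)"] intn
        by (simp add: phi_def set_lebesgue_integral_def)
      also have "\<dots> = G t" unfolding G_def sum_shift1 by (simp add: mult.commute)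
      finally show ?thesis .
    qed
    define W where "W t = (\<Sum>n. wK (kd K \<epsilon>) (c \<epsilon> t) phi (Suc n)) + (\<Sum>n. \<Sum>m. wC (kd C \<epsilon>) (c \<epsilon> t) phi (Suc n) m)" for t
    have WK: "summable (\<lambda>n. wK (kd K \<epsilon>) (c \<epsilon> t) phi (Suc n))
       \<and> (\<forall>i\<ge>1. summable (\<lambda>m. wC (kd C \<epsilon>) (c \<epsilon> t) phi i m))
       \<and> summable (\<lambda>n. \<Sum>m. wC (kd C \<epsilon>) (c \<epsilon> t) phi (Suc n) m)
       \<and> (G has_real_derivative W t) (at t within {0..})" if "t \<ge> 0" for t
    proof -
      have eqG: "(\<lambda>s. \<Sum>i\<in>{i. phi i \<noteq> 0 \<and> i \<ge> 1}. phi i * c \<epsilon> s i) = G"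
        unfolding G_def by (rule ext) (rule Sset)
      show ?thesis using weak[rule_format, OF finphi that] unfolding eqG W_def by blast
    qed
    define h where "h t = (\<Sum>i=1..N0. phi i * disc_rhs (kd K \<epsilon>) (kd C \<epsilon>) (c \<epsilon> t) i)" for t
    have hder: "(G has_real_derivative h t) (at t within {0..})" if "t \<ge> 0" for t
      unfolding h_def G_def
      by (intro DERIV_sum DERIV_cmult) (use c_ode eps that in auto)
    have hW: "h t = W t" if "t \<ge> 0" for t
      using vector_derivative_unique_within[OF at_within_Ici_nonbot[OF that]
          hder[OF that, unfolded has_real_derivative_iff_has_vector_derivative]
          WK[OF that, THEN conjunct2, THEN conjunct2, THEN conjunct2, unfolded has_real_derivative_iff_has_vector_derivative]] .
    have hcont: "continuous_on {0..} h"
      unfolding h_def by (intro continuous_on_sum continuous_on_mult_left) (use c_C1 eps in auto)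
    have Wb: "\<bar>W t\<bar> \<le> MH" if t: "t \<ge> 0" for t
    proof -
      define cc where "cc = c \<epsilon> t"
      have ccn: "0 \<le> cc i" if "1 \<le> i" for i using cnn[OF t that] by (simp add: cc_def)
      have act: "phi i = 0" if "1 \<le> i" "\<not> real i * \<epsilon> < R + 1" for i using phiZ that by simp
      have termK: "\<bar>(real j * (phi (i+1) - phi i) - phi j) * kd K \<epsilon> i j * cc i * cc j\<bar> \<le> QK * \<epsilon> * \<epsilon> * (2 + real i * \<epsilon>) * cc i * cc j"
        if ij: "1 \<le> j" "j \<le> i" for i j
      proof -
        have i1: "1 \<le> i" using ij by simp
        define co where "co = real j * (phi (i+1) - phi i) - phi j"
        have coB: "\<bar>co\<bar> \<le> ((R+1)*L + P) * \<epsilon> \<and> (co \<noteq> 0 \<longrightarrow> real j * \<epsilon> < R + 1)"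
        proof (cases "real i * \<epsilon> < R + 1")
          case True
          have "real j * \<epsilon> \<le> real i * \<epsilon>" using ij e0 by (intro mult_right_mono) auto
          then have je: "real j * \<epsilon> < R + 1" using True by linarith
          have "\<bar>co\<bar> \<le> \<bar>real j * (phi (i+1) - phi i)\<bar> + \<bar>phi j\<bar>" unfolding co_def by (rule abs_triangle_ineq4)
          also have "\<dots> = real j * \<bar>phi (i+1) - phi i\<bar> + \<bar>phi j\<bar>" by (simp add: abs_mult)
          also have "\<dots> \<le> real j * (L * \<epsilon> * \<epsilon>) + \<epsilon> * P"
            using phiD[OF i1] phiA[of j] by (intro add_mono mult_left_mono) auto
          also have "real j * (L * \<epsilon> * \<epsilon>) = (real j * \<epsilon>) * (L * \<epsilon>)" by (simp add: algebra_simps)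
          also have "\<dots> \<le> (R + 1) * (L * \<epsilon>)" using je L0 e0 by (intro mult_right_mono) auto
          finally have "\<bar>co\<bar> \<le> ((R+1)*L + P) * \<epsilon>" by (simp add: algebra_simps)
          then show ?thesis using je by simp
        next
          case False
          have pi: "phi i = 0" using act[OF i1 False] .
          have "real i * \<epsilon> \<le> real (i+1) * \<epsilon>" using e0 by (intro mult_right_mono) auto
          then have "\<not> real (i+1) * \<epsilon> < R + 1" using False by linarith
          then have pi1: "phi (i+1) = 0" using act[of "i+1"] by simp
          have co: "co = - phi j" unfolding co_def pi1 pi by simp
          have "\<bar>co\<bar> \<le> \<epsilon> * P" using phiA[of j] co by simp
          also have "\<dots> \<le> ((R+1)*L + P) * \<epsilon>" using R1 L0 e0 by (simp add: algebra_simps)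
          finally have "\<bar>co\<bar> \<le> ((R+1)*L + P) * \<epsilon>" .
          moreover have "co \<noteq> 0 \<longrightarrow> real j * \<epsilon> < R + 1" using act[OF ij(1)] co by force
          ultimately show ?thesis by simp
        qed
        have kdB: "kd K \<epsilon> i j \<le> \<epsilon> * (A * (2 + real i * \<epsilon>))" if jR: "real j * \<epsilon> < R + 1"
        proof (rule kd_le[OF e0])
          show "0 \<le> A * (2 + real i * \<epsilon>)" using A0 e0 by simp
          fix x y assume x: "x \<in> Lam \<epsilon> i" and y: "y \<in> Lam \<epsilon> j"
          have x0: "x > 0" using Lam_pos[OF e0 i1 x] .
          have y0: "y > 0" using Lam_pos[OF e0 ij(1) y] .
          have "y < (real j + 1/2) * \<epsilon>" using y by (simp add: Lam_def)
          then have yR: "y \<le> R + 2" using jR e1 e0 by (simp add: algebra_simps)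
          have xb: "x < (real i + 1/2) * \<epsilon>" using x by (simp add: Lam_def)
          have "K x y \<le> A * (1 + x)" using KA x0 y0 yR by auto
          also have "\<dots> \<le> A * (2 + real i * \<epsilon>)" using A0 xb e1 by (intro mult_left_mono) (auto simp: algebra_simps)
          finally show "K x y \<le> A * (2 + real i * \<epsilon>)" .
        qed
        have kd0: "0 \<le> kd K \<epsilon> i j" using Kdnn[OF i1 ij(1)] .
        have ci: "0 \<le> cc i" "0 \<le> cc j" using ccn[OF i1] ccn[OF ij(1)] by auto
        have "\<bar>co * kd K \<epsilon> i j * cc i * cc j\<bar> \<le> QK * \<epsilon> * \<epsilon> * (2 + real i * \<epsilon>) * cc i * cc j"
        proof (cases "co = 0")
          case True
          have "0 \<le> QK * \<epsilon> * \<epsilon> * (2 + real i * \<epsilon>) * cc i * cc j"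
            by (intro mult_nonneg_nonneg) (use QK0 e0 ci in auto)
          then show ?thesis using True by simp
        next
          case False
          then have jR: "real j * \<epsilon> < R + 1" using coB by simp
          have "\<bar>co * kd K \<epsilon> i j * cc i * cc j\<bar> = \<bar>co\<bar> * kd K \<epsilon> i j * (cc i * cc j)"
            using kd0 ci by (simp add: abs_mult mult.assoc)
          also have "\<dots> \<le> (((R+1)*L + P) * \<epsilon>) * (\<epsilon> * (A * (2 + real i * \<epsilon>))) * (cc i * cc j)"
            using coB kdB[OF jR] kd0 ci by (intro mult_right_mono mult_mono) auto
          also have "\<dots> = QK * \<epsilon> * \<epsilon> * (2 + real i * \<epsilon>) * cc i * cc j" by (simp add: QK_def algebra_simps)
          finally show ?thesis .
        qed
        then show ?thesis by (simp add: co_def)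
      qed
      have wKb: "\<bar>wK (kd K \<epsilon>) cc phi i\<bar> \<le> QK * F * (2 * (\<epsilon> * cc i) + \<epsilon> * \<epsilon> * (real i * cc i))" if i1: "1 \<le> i" for i
      proof -
        have "\<bar>wK (kd K \<epsilon>) cc phi i\<bar> \<le> (\<Sum>j=1..i. \<bar>(real j * (phi (i+1) - phi i) - phi j) * kd K \<epsilon> i j * cc i * cc j\<bar>)"
          unfolding wK_def by (rule sum_abs)
        also have "\<dots> \<le> (\<Sum>j=1..i. QK * \<epsilon> * \<epsilon> * (2 + real i * \<epsilon>) * cc i * cc j)"
          by (rule sum_mono) (use termK in auto)
        also have "\<dots> = (QK * \<epsilon> * (2 + real i * \<epsilon>) * cc i) * (\<epsilon> * (\<Sum>j=1..i. cc j))"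
          by (simp add: sum_distrib_left sum.distrib algebra_simps)
        also have "\<dots> \<le> (QK * \<epsilon> * (2 + real i * \<epsilon>) * cc i) * F"
          using numb[OF t, of i] QK0 e0 ccn[OF i1] by (intro mult_left_mono) (auto simp: cc_def)
        also have "\<dots> = QK * F * (2 * (\<epsilon> * cc i) + \<epsilon> * \<epsilon> * (real i * cc i))" by (simp add: algebra_simps)
        finally show ?thesis .
      qed
      have SK: "\<bar>\<Sum>n. wK (kd K \<epsilon>) cc phi (Suc n)\<bar> \<le> 3*QK*F*F"
      proof (rule suminf_abs_bound)
        show "summable (\<lambda>n. wK (kd K \<epsilon>) cc phi (Suc n))" using WK[OF t] by (simp add: cc_def)
        fix N
        have "\<bar>\<Sum>n<N. wK (kd K \<epsilon>) cc phi (Suc n)\<bar> \<le> (\<Sum>n<N. \<bar>wK (kd K \<epsilon>) cc phi (Suc n)\<bar>)" by (rule sum_abs)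
        also have "\<dots> \<le> (\<Sum>n<N. QK * F * (2 * (\<epsilon> * cc (Suc n)) + \<epsilon> * \<epsilon> * (real (Suc n) * cc (Suc n))))"
          by (rule sum_mono) (rule wKb, simp)
        also have "\<dots> = QK * F * (2 * (\<epsilon> * (\<Sum>n<N. cc (Suc n))) + \<epsilon> * \<epsilon> * (\<Sum>n<N. real (Suc n) * cc (Suc n)))"
          by (simp add: sum_distrib_left sum.distrib algebra_simps)
        also have "\<dots> \<le> QK * F * (2 * F + F)"
          using numbS[OF t, of N] massbS[OF t, of N] QK0 F0 by (intro mult_left_mono add_mono) (auto simp: cc_def)
        also have "\<dots> = 3*QK*F*F" by (simp add: algebra_simps)
        finally show "\<bar>\<Sum>n<N. wK (kd K \<epsilon>) cc phi (Suc n)\<bar> \<le> 3*QK*F*F" .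
      qed
      have termC: "\<bar>wC (kd C \<epsilon>) cc phi i m\<bar> \<le> MC * (\<epsilon> * cc i) * (L * (\<epsilon> * \<epsilon> * (real (m+i) * cc (m+i))) + P * (\<epsilon> * cc (m+i)))" if i1: "1 \<le> i" for i m
      proof -
        have j1: "1 \<le> m + i" using i1 by simp
        have ci: "0 \<le> cc i" "0 \<le> cc (m+i)" using ccn[OF i1] ccn[OF j1] by auto
        have nnR: "0 \<le> MC * (\<epsilon> * cc i) * (L * (\<epsilon> * \<epsilon> * (real (m+i) * cc (m+i))) + P * (\<epsilon> * cc (m+i)))"
          using MC0 e0 ci L0 P0 by (intro mult_nonneg_nonneg add_nonneg_nonneg) auto
        show ?thesis
        proof (cases "real i * \<epsilon> < R + 1")
          case False
          have "real i * \<epsilon> \<le> real (i+1) * \<epsilon>" "real i * \<epsilon> \<le> real (m+i) * \<epsilon>" using e0 by (intro mult_right_mono; simp)+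
          then have "phi i = 0" "phi (i+1) = 0" "phi (m+i) = 0"
            using act[OF i1 False] act[of "i+1"] act[OF j1] False by auto
          then show ?thesis using nnR by (simp add: wC_def)
        next
          case True
          define co where "co = real (m+i) * (phi (i+1) - phi i) - phi (m+i)"
          have coB: "\<bar>co\<bar> \<le> real (m+i) * (L * \<epsilon> * \<epsilon>) + \<epsilon> * P"
          proof -
            have "\<bar>co\<bar> \<le> \<bar>real (m+i) * (phi (i+1) - phi i)\<bar> + \<bar>phi (m+i)\<bar>" unfolding co_def by (rule abs_triangle_ineq4)
            also have "\<dots> = real (m+i) * \<bar>phi (i+1) - phi i\<bar> + \<bar>phi (m+i)\<bar>" by (simp add: abs_mult)
            also have "\<dots> \<le> real (m+i) * (L * \<epsilon> * \<epsilon>) + \<epsilon> * P"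
              using phiD[OF i1] phiA[of "m+i"] by (intro add_mono mult_left_mono) auto
            finally show ?thesis .
          qed
          have kdB: "kd C \<epsilon> i (m+i) \<le> \<epsilon> * MC"
          proof (rule kd_le[OF e0 MC0])
            fix x y assume x: "x \<in> Lam \<epsilon> i" and y: "y \<in> Lam \<epsilon> (m+i)"
            have x0: "x > 0" using Lam_pos[OF e0 i1 x] .
            have y0: "y > 0" using Lam_pos[OF e0 j1 y] .
            have "x < (real i + 1/2) * \<epsilon>" using x by (simp add: Lam_def)
            then have "x \<le> R + 2" using True e1 e0 by (simp add: algebra_simps)
            then show "C x y \<le> MC" using CM x0 y0 by auto
          qed
          have kd0: "0 \<le> kd C \<epsilon> i (m+i)" using Cdnn[OF i1 j1] .
          have "\<bar>wC (kd C \<epsilon>) cc phi i m\<bar> = \<bar>co\<bar> * kd C \<epsilon> i (m+i) * (cc i * cc (m+i))"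
            unfolding wC_def co_def using kd0 ci by (simp add: abs_mult mult.assoc)
          also have "\<dots> \<le> (real (m+i) * (L * \<epsilon> * \<epsilon>) + \<epsilon> * P) * (\<epsilon> * MC) * (cc i * cc (m+i))"
            using coB kdB kd0 ci by (intro mult_right_mono mult_mono) auto
          also have "\<dots> = MC * (\<epsilon> * cc i) * (L * (\<epsilon> * \<epsilon> * (real (m+i) * cc (m+i))) + P * (\<epsilon> * cc (m+i)))"
            by (simp add: algebra_simps)
          finally show ?thesis .
        qed
      qed
      have innerb: "\<bar>\<Sum>m. wC (kd C \<epsilon>) cc phi i m\<bar> \<le> MC * (L + P) * F * (\<epsilon> * cc i)" if i1: "1 \<le> i" for i
      proof (rule suminf_abs_bound)
        show "summable (\<lambda>m. wC (kd C \<epsilon>) cc phi i m)" using WK[OF t] i1 by (simp add: cc_def)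
        fix NN
        have "\<bar>\<Sum>m<NN. wC (kd C \<epsilon>) cc phi i m\<bar> \<le> (\<Sum>m<NN. \<bar>wC (kd C \<epsilon>) cc phi i m\<bar>)" by (rule sum_abs)
        also have "\<dots> \<le> (\<Sum>m<NN. MC * (\<epsilon> * cc i) * (L * (\<epsilon> * \<epsilon> * (real (m+i) * cc (m+i))) + P * (\<epsilon> * cc (m+i))))"
          by (rule sum_mono) (rule termC[OF i1])
        also have "\<dots> = MC * (\<epsilon> * cc i) * (L * (\<epsilon> * \<epsilon> * (\<Sum>m<NN. real (m+i) * cc (m+i))) + P * (\<epsilon> * (\<Sum>m<NN. cc (m+i))))"
          by (simp add: sum_distrib_left sum.distrib algebra_simps)
        also have "\<dots> \<le> MC * (\<epsilon> * cc i) * (L * F + P * F)"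
          using massb'[OF t i1, of NN] numb'[OF t i1, of NN] MC0 e0 ccn[OF i1] L0 P0
          by (intro mult_left_mono add_mono) (auto simp: cc_def)
        also have "\<dots> = MC * (L + P) * F * (\<epsilon> * cc i)" by (simp add: algebra_simps)
        finally show "\<bar>\<Sum>m<NN. wC (kd C \<epsilon>) cc phi i m\<bar> \<le> MC * (L + P) * F * (\<epsilon> * cc i)" .
      qed
      have SC: "\<bar>\<Sum>n. \<Sum>m. wC (kd C \<epsilon>) cc phi (Suc n) m\<bar> \<le> MC*(L+P)*F*F"
      proof (rule suminf_abs_bound)
        show "summable (\<lambda>n. \<Sum>m. wC (kd C \<epsilon>) cc phi (Suc n) m)" using WK[OF t] by (simp add: cc_def)
        fix N
        have "\<bar>\<Sum>n<N. \<Sum>m. wC (kd C \<epsilon>) cc phi (Suc n) m\<bar> \<le> (\<Sum>n<N. \<bar>\<Sum>m. wC (kd C \<epsilon>) cc phi (Suc n) m\<bar>)" by (rule sum_abs)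
        also have "\<dots> \<le> (\<Sum>n<N. MC * (L + P) * F * (\<epsilon> * cc (Suc n)))" by (rule sum_mono) (rule innerb, simp)
        also have "\<dots> = MC * (L + P) * F * (\<epsilon> * (\<Sum>n<N. cc (Suc n)))" by (simp add: sum_distrib_left)
        also have "\<dots> \<le> MC * (L + P) * F * F"
          using numbS[OF t, of N] MC0 L0 P0 F0 by (intro mult_left_mono) (auto simp: cc_def)
        finally show "\<bar>\<Sum>n<N. \<Sum>m. wC (kd C \<epsilon>) cc phi (Suc n) m\<bar> \<le> MC*(L+P)*F*F" .
      qed
      have "\<bar>W t\<bar> \<le> \<bar>\<Sum>n. wK (kd K \<epsilon>) cc phi (Suc n)\<bar> + \<bar>\<Sum>n. \<Sum>m. wC (kd C \<epsilon>) cc phi (Suc n) m\<bar>"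
        unfolding W_def cc_def by (rule abs_triangle_ineq)
      then show ?thesis using SK SC by (simp add: MH_def)
    qed
    have gb: "\<bar>G t\<bar> \<le> P * F" if "t \<ge> 0" for t
    proof -
      have "\<bar>G t\<bar> \<le> (\<Sum>i=1..N0. \<bar>phi i * c \<epsilon> t i\<bar>)" unfolding G_def by (rule sum_abs)
      also have "\<dots> \<le> (\<Sum>i=1..N0. P * (\<epsilon> * c \<epsilon> t i))"
      proof (rule sum_mono)
        fix i assume i: "i \<in> {1..N0}"
        have "\<bar>phi i * c \<epsilon> t i\<bar> = \<bar>phi i\<bar> * c \<epsilon> t i" using cnn[OF that, of i] i by (simp add: abs_mult)
        also have "\<dots> \<le> (\<epsilon> * P) * c \<epsilon> t i" using phiA[of i] cnn[OF that, of i] i by (intro mult_right_mono) auto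
        finally show "\<bar>phi i * c \<epsilon> t i\<bar> \<le> P * (\<epsilon> * c \<epsilon> t i)" by (simp add: algebra_simps)
      qed
      also have "\<dots> = P * (\<epsilon> * (\<Sum>i=1..N0. c \<epsilon> t i))" by (simp add: sum_distrib_left)
      also have "\<dots> \<le> P * F" using numb[OF that] P0 by (intro mult_left_mono) auto
      finally show ?thesis .
    qed
    show "let g = (\<lambda>t. LINT x:{0<..}|lborel. feps \<epsilon> (c \<epsilon>) t x * \<Phi> x) in
           (\<forall>t\<in>{0..T}. \<bar>g t\<bar> \<le> M)
         \<and> (\<exists>h. set_integrable lborel {0..T} h \<and> (\<forall>t\<in>{0..T}. \<bar>h t\<bar> \<le> M)
                \<and> (\<forall>s t. 0 \<le> s \<and> s \<le> t \<and> t \<le> T \<longrightarrow> g t - g s = (LINT \<tau>:{s..t}|lborel. h \<tau>)))"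
      unfolding Let_def gform
    proof (intro conjI ballI exI[of _ h] allI impI)
      fix t assume "t \<in> {0..T}"
      then show "\<bar>G t\<bar> \<le> M" using gb[of t] by (auto simp: M_def)
    next
      show "set_integrable lborel {0..T} h"
        unfolding set_integrable_def
        by (rule borel_integrable_compact) (auto intro: continuous_on_subset[OF hcont])
    next
      fix t assume "t \<in> {0..T}"
      then show "\<bar>h t\<bar> \<le> M" using Wb[of t] hW[of t] by (auto simp: M_def)
    next
      fix s t assume st: "0 \<le> s \<and> s \<le> t \<and> t \<le> T"
      have "(LBINT x=s..t. h x) = G t - G s"
      proof (rule interval_integral_FTC_finite)
        show "continuous_on {min s t..max s t} h" by (rule continuous_on_subset[OF hcont]) (use st in auto)
        fix x assume "min s t \<le> x" "x \<le> max s t"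
        then have x: "x \<ge> 0" using st by auto
        have "(G has_real_derivative h x) (at x within {min s t..max s t})"
          by (rule DERIV_subset[OF hder[OF x]]) (use st in auto)
        then show "(G has_vector_derivative h x) (at x within {min s t..max s t})"
          by (simp add: has_real_derivative_iff_has_vector_derivative)
      qed
      then show "G t - G s = (LINT \<tau>:{s..t}|lborel. h \<tau>)"
        using interval_integral_Icc[of s t h] st by simp
    qed
  qed
qed

end
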